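(* Let $\Omega$ be a semigroup and $(\mathcal{A},\{\eta^1,\eta^2,\dots\})$ a $Dend_\infty$-family algebra relative to $\Omega$. Then $(\mathcal{A}\otimes\mathbf{k}\Omega,\{\overline{\eta}^1,\overline{\eta}^2,\dots\})$ is a $Dend_\infty$-algebra, where $\overline{\eta}^k=(\overline{\eta}^{k,[1]},\dots,\overline{\eta}^{k,[k]})$ is defined by $\overline{\eta}^{k,[r]}(a_1\otimes\alpha_1,\dots,a_k\otimes\alpha_k)=\eta^{k,[r]}_{\alpha_1,\dots,\alpha_k}(a_1,\dots,a_k)\otimes\alpha_1\cdots\alpha_k$ (extended multilinearly) for $a_j\in\mathcal{A}$, $\alpha_j\in\Omega$, $[r]\in C_k$.
   Context: $\mathbf{k}$ is a commutative unital ring of characteristic $0$; $\Omega$ a semigroup; $\mathbf{k}\Omega$ the free $\mathbf{k}$-module on $\Omega$; $\mathcal{A}=\oplus_{i\in\mathbb{Z}}\mathcal{A}^i$ a graded $\mathbf{k}$-module and $\mathcal{A}\otimes\mathbf{k}\Omega$ is graded by $(\mathcal{A}\otimes\mathbf{k}\Omega)^i=\mathcal{A}^i\otimes\mathbf{k}\Omega$. $C_k=\{[1],\dots,[k]\}$ are formal symbols. For $m,n\ge1$, $1\le i\le m$, $1\le r\le m+n-1$ define $R_0[r]:=R_0(m;1,\dots,n,\dots,1)[r]$ to be $[r]$ if $r\le i-1$, $[i]$ if $i\le r\le i+n-1$, $[r-n+1]$ if $r\ge i+n$; and $R_i[r]:=R_i(m;1,\dots,n,\dots,1)[r]$ to be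 $[r-i+1]$ if $i\le r\le i+n-1$ and the formal sum $[1]+\cdots+[n]$ otherwise; for a tuple $\eta^n$ one sets $\eta^{n,[1]+\cdots+[n]}=\eta^{n,[1]}+\cdots+\eta^{n,[n]}$. Sign: $\pm:=(-1)^{i(n+1)+n(|a_1|+\cdots+|a_{i-1}|)}$. A $Dend_\infty$-family algebra is a graded $\mathcal{A}$ with, for each $k\ge1$, a $k$-tuple $\eta^k=(\eta^{k,[1]},\dots,\eta^{k,[k]})$ where each $\eta^{k,[r]}$ is a collection $\{\eta^{k,[r]}_{\alpha_1,\dots,\alpha_k}:\mathcal{A}^{\otimes k}\to\mathcal{A}\}_{\alpha_1,\dots,\alpha_k\in\Omega}$ of multilinear maps of degree $k-2$ such that $\eta^{k,[r]}_{\alpha_1,\dots,\alpha_k}$ does not depend on $\alpha_r$, satisfying for all $N\ge1$, $[r]\in C_N$, homogeneous $a_1,\dots,a_N$ and $\alpha_1,\dots,\alpha_N\in\Omega$: $\sum_{m+n=N+1}\sum_{i=1}^m\pm\,\eta^{m,R_0[r]}_{\alpha_1,\dots,\alpha_{i-1},\alpha_i\cdots\alpha_{i+n-1},\alpha_{i+n},\dots,\alpha_N}\big(a_1,\dots,a_{i-1},\eta^{n,R_i[r]}_{\alpha_i,\dots,\alpha_{i+n-1}}(a_i,\dots,a_{i+n-1}),a_{i+n},\dots,a_N\big)=0$. A $Dend_\infty$-algebra is the same notion with $\Omega$ a singleton (no labels, no independence condition): a graded module $\mathcal{B}$ with $k$-tuples $(\eta^{k,[1]},\dots,\eta^{k,[k]})$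 of multilinear maps $\mathcal{B}^{\otimes k}\to\mathcal{B}$ of degree $k-2$ satisfying $\sum_{m+n=N+1}\sum_{i=1}^m\pm\,\eta^{m,R_0[r]}(b_1,\dots,\eta^{n,R_i[r]}(b_i,\dots,b_{i+n-1}),\dots,b_N)=0$ for all $N$, $[r]\in C_N$. *)

theory Defs
  imports Complex_Main "HOL-Library.Poly_Mapping"
begin

fun sprod :: "'w::semigroup_mult list \<Rightarrow> 'w" where
  "sprod [] = undefined"
| "sprod [x] = x"
| "sprod (x # y # xs) = x * sprod (y # xs)"

definition multilinear :: "('k::comm_ring_1 \<Rightarrow> 'a::ab_group_add \<Rightarrow> 'a)
    \<Rightarrow> ('k \<Rightarrow> 'b::ab_group_add \<Rightarrow> 'b) \<Rightarrow> nat \<Rightarrow> ('a list \<Rightarrow> 'b) \<Rightarrow> bool" where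
  "multilinear scA scB n f \<longleftrightarrow>
     (\<forall>xs j x y c. length xs = n \<and> j < n \<longrightarrow>
        f (xs[j := x + y]) = f (xs[j := x]) + f (xs[j := y]) \<and>
        f (xs[j := scA c x]) = scB c (f (xs[j := x])))"

definition graded_module :: "('k::comm_ring_1 \<Rightarrow> 'a::ab_group_add \<Rightarrow> 'a) \<Rightarrow> (int \<Rightarrow> 'a set) \<Rightarrow> bool" where
  "graded_module sc G \<longleftrightarrow> module sc \<and> (\<forall>d. 0 \<in> G d \<and> (\<forall>x\<in>G d. \<forall>y\<in>G d. x + y \<in> G d) \<and> (\<forall>c. \<forall>x\<in>G d. sc c x \<in> G d)) \<and>
     (\<forall>x. \<exists>!c :: int \<Rightarrow>\<^sub>0 'a. (\<forall>d. Poly_Mapping.lookup c d \<in> G d) \<and> x = (\<Sum>d\<in>Poly_Mapping.keys c. Poly_Mapping.lookup c d))"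

(* R_0(m;1,..,n,..,1)[r] (a single index) and R_i(m;1,..,n,..,1)[r]
   (a single index or the formal sum [1]+...+[n], represented as the set of summands) *)
definition R0 :: "nat \<Rightarrow> nat \<Rightarrow> nat \<Rightarrow> nat \<Rightarrow> nat" where
  "R0 m n i r = (if r \<le> i - 1 then r else if r \<le> i + n - 1 then i else r - n + 1)"

definition Ri :: "nat \<Rightarrow> nat \<Rightarrow> nat \<Rightarrow> nat \<Rightarrow> nat set" where
  "Ri m n i r = (if i \<le> r \<and> r \<le> i + n - 1 then {r - i + 1} else {1..n})"

definition sgnapp :: "nat \<Rightarrow> nat \<Rightarrow> int list \<Rightarrow> 'a::ab_group_add \<Rightarrow> 'a" where
  "sgnapp i n ds x = (if even (int i * (int n + 1) + int n * sum_list (take (i - 1) ds)) then x else - x)"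

(* eta k r alphas as  =  eta^{k,[r]}_{alpha_1..alpha_k}(a_1..a_k)   (1 <= r <= k) *)
definition dend_family_algebra ::
  "('k::comm_ring_1 \<Rightarrow> 'a::ab_group_add \<Rightarrow> 'a) \<Rightarrow> (int \<Rightarrow> 'a set)
     \<Rightarrow> (nat \<Rightarrow> nat \<Rightarrow> 'w::semigroup_mult list \<Rightarrow> 'a list \<Rightarrow> 'a) \<Rightarrow> bool" where
  "dend_family_algebra sc G eta \<longleftrightarrow>
     graded_module sc G \<and>
     (\<forall>k r als. 1 \<le> r \<and> r \<le> k \<and> length als = k \<longrightarrow> multilinear sc sc k (eta k r als)) \<and>
     (\<forall>k r als xs ds. 1 \<le> r \<and> r \<le> k \<and> length als = k \<and> length xs = k \<and> length ds = k \<and>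
        (\<forall>j<k. xs ! j \<in> G (ds ! j)) \<longrightarrow> eta k r als xs \<in> G (sum_list ds + int k - 2)) \<and>
     (\<forall>k r als b xs. 1 \<le> r \<and> r \<le> k \<and> length als = k \<and> length xs = k \<longrightarrow>
        eta k r (als[r - 1 := b]) xs = eta k r als xs) \<and>
     (\<forall>N r als xs ds. 1 \<le> N \<and> 1 \<le> r \<and> r \<le> N \<and> length als = N \<and> length xs = N \<and> length ds = N \<and>
        (\<forall>j<N. xs ! j \<in> G (ds ! j)) \<longrightarrow>
        (\<Sum>n\<in>{1..N}. \<Sum>i\<in>{1..N + 1 - n}.
           sgnapp i n ds
             (eta (N + 1 - n) (R0 (N + 1 - n) n i r)
                (take (i - 1) als @ [sprod (take n (drop (i - 1) als))] @ drop (i - 1 + n) als)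
                (take (i - 1) xs @
                   [(\<Sum>s\<in>Ri (N + 1 - n) n i r. eta n s (take n (drop (i - 1) als)) (take n (drop (i - 1) xs)))]
                   @ drop (i - 1 + n) xs))) = 0)"

(* eta k r bs  =  eta^{k,[r]}(b_1..b_k)   (1 <= r <= k) *)
definition dend_algebra ::
  "('k::comm_ring_1 \<Rightarrow> 'b::ab_group_add \<Rightarrow> 'b) \<Rightarrow> (int \<Rightarrow> 'b set)
     \<Rightarrow> (nat \<Rightarrow> nat \<Rightarrow> 'b list \<Rightarrow> 'b) \<Rightarrow> bool" where
  "dend_algebra sc G eta \<longleftrightarrow>
     graded_module sc G \<and>
     (\<forall>k r. 1 \<le> r \<and> r \<le> k \<longrightarrow> multilinear sc sc k (eta k r)) \<and>
     (\<forall>k r bs ds. 1 \<le> r \<and> r \<le> k \<and> length bs = k \<and> length ds = k \<and>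
        (\<forall>j<k. bs ! j \<in> G (ds ! j)) \<longrightarrow> eta k r bs \<in> G (sum_list ds + int k - 2)) \<and>
     (\<forall>N r bs ds. 1 \<le> N \<and> 1 \<le> r \<and> r \<le> N \<and> length bs = N \<and> length ds = N \<and>
        (\<forall>j<N. bs ! j \<in> G (ds ! j)) \<longrightarrow>
        (\<Sum>n\<in>{1..N}. \<Sum>i\<in>{1..N + 1 - n}.
           sgnapp i n ds
             (eta (N + 1 - n) (R0 (N + 1 - n) n i r)
                (take (i - 1) bs @
                   [(\<Sum>s\<in>Ri (N + 1 - n) n i r. eta n s (take n (drop (i - 1) bs)))]
                   @ drop (i - 1 + n) bs))) = 0)"

(* A \<otimes> k\<Omega> realised as (+)_{alpha in Omega} A, i.e. finitely supported maps Omega \<Rightarrow> A;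
   a \<otimes> alpha corresponds to  Poly_Mapping.single alpha a. *)
definition tensor_scale :: "('k \<Rightarrow> 'a::ab_group_add \<Rightarrow> 'a) \<Rightarrow> 'k \<Rightarrow> ('w \<Rightarrow>\<^sub>0 'a) \<Rightarrow> ('w \<Rightarrow>\<^sub>0 'a)" where
  "tensor_scale sc c f = Poly_Mapping.map (sc c) f"

definition tensor_grading :: "(int \<Rightarrow> 'a::zero set) \<Rightarrow> int \<Rightarrow> ('w \<Rightarrow>\<^sub>0 'a) set" where
  "tensor_grading G d = {f. \<forall>w. Poly_Mapping.lookup f w \<in> G d}"

definition tensor_ops :: "(nat \<Rightarrow> nat \<Rightarrow> 'w::semigroup_mult list \<Rightarrow> 'a::ab_group_add list \<Rightarrow> 'a)
    \<Rightarrow> nat \<Rightarrow> nat \<Rightarrow> ('w \<Rightarrow>\<^sub>0 'a) list \<Rightarrow> ('w \<Rightarrow>\<^sub>0 'a)" where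
  "tensor_ops eta k r fs =
     (\<Sum>als\<in>listset (List.map Poly_Mapping.keys fs).
        Poly_Mapping.single (sprod als) (eta k r als (List.map2 Poly_Mapping.lookup fs als)))"

end

theory Submission
  imports Defs
begin


lemma listset_char: "listset Xs = {ys. length ys = length Xs \<and> (\<forall>i<length Xs. ys!i \<in> Xs!i)}"
proof (induction Xs)
  case Nil then show ?case by auto
next
  case (Cons X Xs)
  show ?case
  proof (rule set_eqI, rule iffI)
    fix ys assume "ys \<in> listset (X # Xs)"
    then obtain a l where "ys = a # l" "a \<in> X" "l \<in> listset Xs" by (auto simp: set_Cons_def)
    then show "ys \<in> {ys. length ys = length (X # Xs) \<and> (\<forall>i<length (X # Xs). ys ! i \<in> (X # Xs) ! i)}"
      using Cons by (auto simp: nth_Cons split: nat.splits)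
  next
    fix ys assume a: "ys \<in> {ys. length ys = length (X # Xs) \<and> (\<forall>i<length (X # Xs). ys ! i \<in> (X # Xs) ! i)}"
    then obtain y l where ys: "ys = y # l" by (cases ys) auto
    have "y \<in> X" using a ys by force
    moreover have "l \<in> listset Xs" using a ys Cons by force
    ultimately show "ys \<in> listset (X # Xs)" using ys by (auto simp: set_Cons_def)
  qed
qed

lemma listset_length: "ys \<in> listset Xs \<Longrightarrow> length ys = length Xs"
  by (simp add: listset_char)

lemma finite_listset: "(\<forall>X\<in>set Xs. finite X) \<Longrightarrow> finite (listset Xs)"
proof (induction Xs)
  case Nil then show ?case by simp
next
  case (Cons X Xs)
  have "set_Cons X (listset Xs) = (\<lambda>(a,l). a # l) ` (X \<times> listset Xs)"
    by (auto simp: set_Cons_def)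
  then show ?case using Cons by simp
qed

lemma listset_append: "listset (Xs @ Ys) = (\<lambda>(p,q). p @ q) ` (listset Xs \<times> listset Ys)"
proof (rule set_eqI, rule iffI)
  fix ys assume a: "ys \<in> listset (Xs @ Ys)"
  define p where "p = take (length Xs) ys"
  define q where "q = drop (length Xs) ys"
  have "p \<in> listset Xs" using a unfolding listset_char p_def by (auto simp: nth_append) (metis nth_append trans_less_add1)
  moreover have "q \<in> listset Ys" using a unfolding listset_char q_def by (auto simp: nth_append) (metis add_diff_cancel_left' nat_add_left_cancel_less not_add_less1 nth_append)
  ultimately show "ys \<in> (\<lambda>(p,q). p @ q) ` (listset Xs \<times> listset Ys)"
    unfolding p_def q_def image_iff by (intro bexI[of _ "(take (length Xs) ys, drop (length Xs) ys)"]) auto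
next
  fix ys assume "ys \<in> (\<lambda>(p,q). p @ q) ` (listset Xs \<times> listset Ys)"
  then show "ys \<in> listset (Xs @ Ys)" by (auto simp: listset_char nth_append)
qed

lemma sum_listset_append:
  assumes "\<forall>X\<in>set Xs. finite X" "\<forall>X\<in>set Ys. finite X"
  shows "(\<Sum>a\<in>listset (Xs @ Ys). f a) = (\<Sum>p\<in>listset Xs. \<Sum>q\<in>listset Ys. f (p @ q))"
proof -
  have inj: "inj_on (\<lambda>(p,q). p @ q) (listset Xs \<times> listset Ys)"
    by (auto simp: inj_on_def listset_length)
  have "(\<Sum>a\<in>listset (Xs @ Ys). f a) = (\<Sum>x\<in>listset Xs \<times> listset Ys. f ((\<lambda>(p,q). p @ q) x))"
    unfolding listset_append by (rule sum.reindex[OF inj, unfolded comp_def])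
  also have "\<dots> = (\<Sum>p\<in>listset Xs. \<Sum>q\<in>listset Ys. f (p @ q))"
    by (subst sum.cartesian_product) (auto simp: case_prod_beta)
  finally show ?thesis .
qed

lemma sum_listset_single: "(\<Sum>a\<in>listset [S]. f a) = (\<Sum>g\<in>S. f [g])"
proof -
  have "listset [S] = (\<lambda>g. [g]) ` S" by (auto simp: set_Cons_def)
  then show ?thesis by (simp add: sum.reindex inj_on_def)
qed

lemma ml_zero:
  assumes "multilinear sc sc' k F" "length xs = k" "j < k"
  shows "F (xs[j := 0]) = 0"
proof -
  have "F (xs[j := 0 + 0]) = F (xs[j := 0]) + F (xs[j := 0])"
    using assms unfolding multilinear_def by blast
  then show ?thesis by simp
qed

lemma ml_zero':
  assumes "multilinear sc sc' k F" "length xs = k" "j < k" "xs ! j = 0"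
  shows "F xs = 0"
  using ml_zero[OF assms(1-3)] assms(4) by (metis list_update_id)

lemma ml_sum:
  assumes "multilinear sc sc' k F" "length xs = k" "j < k"
  shows "F (xs[j := sum g I]) = (\<Sum>x\<in>I. F (xs[j := g x]))"
proof (cases "finite I")
  case True
  then show ?thesis
  proof (induction I rule: finite_induct)
    case empty then show ?case using ml_zero[OF assms] by simp
  next
    case (insert x I)
    have "F (xs[j := g x + sum g I]) = F (xs[j := g x]) + F (xs[j := sum g I])"
      using assms unfolding multilinear_def by blast
    then show ?case using insert by simp
  qed
next
  case False then show ?thesis using ml_zero[OF assms] by simp
qed

lemma single_sum: "Poly_Mapping.single k (sum f A) = (\<Sum>x\<in>A. Poly_Mapping.single k (f x))"
  by (induction A rule: infinite_finite_induct) (auto simp: single_add)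

lemma sprod_append: "xs \<noteq> [] \<Longrightarrow> ys \<noteq> [] \<Longrightarrow> sprod (xs @ ys) = sprod xs * sprod ys"
proof (induction xs rule: sprod.induct)
  case 1 then show ?case by simp
next
  case (2 x) then show ?case by (cases ys) auto
next
  case (3 x y xs) then show ?case by (simp add: mult.assoc)
qed

lemma sprod_mid: "b \<noteq> [] \<Longrightarrow> sprod (a @ [sprod b] @ c) = sprod (a @ b @ c)"
proof -
  assume b: "b \<noteq> []"
  have 1: "sprod ([sprod b] @ c) = sprod (b @ c)"
    using b sprod_append[of "[sprod b]" c] sprod_append[of b c] by (cases "c = []") simp_all
  show ?thesis
  proof (cases "a = []")
    case True then show ?thesis using 1 by simp
  next
    case False then show ?thesis using 1 b by (simp add: sprod_append[of a] del: append.simps)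
  qed
qed

lemma map2_update: "length als = length xs \<Longrightarrow> j < length xs \<Longrightarrow>
  map2 f (xs[j := v]) als = (map2 f xs als)[j := f v (als ! j)]"
  by (rule nth_equalityI) (auto simp: nth_list_update)



lemma tensor_ops_superset:
  assumes mlh: "\<And>als. length als = k \<Longrightarrow> multilinear sc sc k (eta k r als)"
  and len: "length Ls = k" "length fs = k"
  and sub: "\<forall>j<k. Poly_Mapping.keys (fs!j) \<subseteq> Ls!j" and fin: "\<forall>X\<in>set Ls. finite X"
  shows "tensor_ops eta k r fs = (\<Sum>als\<in>listset Ls. Poly_Mapping.single (sprod als) (eta k r als (map2 Poly_Mapping.lookup fs als)))"
  unfolding tensor_ops_def
proof (rule sum.mono_neutral_left)
  show "finite (listset Ls)" using fin by (rule finite_listset)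
  show "listset (map Poly_Mapping.keys fs) \<subseteq> listset Ls" using sub len by (auto simp: listset_char)
  show "\<forall>i\<in>listset Ls - listset (map Poly_Mapping.keys fs).
       Poly_Mapping.single (sprod i) (eta k r i (map2 Poly_Mapping.lookup fs i)) = 0"
  proof
    fix als assume a: "als \<in> listset Ls - listset (map Poly_Mapping.keys fs)"
    then have la: "length als = k" using len by (auto simp: listset_char)
    then obtain j where j: "j < k" "als ! j \<notin> Poly_Mapping.keys (fs ! j)" using a len by (auto simp: listset_char)
    have "eta k r als (map2 Poly_Mapping.lookup fs als) = 0"
      by (rule ml_zero'[OF mlh[OF la], of _ j]) (use j la len in \<open>auto simp: in_keys_iff\<close>)
    then show "Poly_Mapping.single (sprod als) (eta k r als (map2 Poly_Mapping.lookup fs als)) = 0" by simp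
  qed
qed

lemma keys_tensor_ops: "Poly_Mapping.keys (tensor_ops eta k r fs) \<subseteq> sprod ` listset (map Poly_Mapping.keys fs)"
  unfolding tensor_ops_def by (rule order.trans[OF keys_sum]) auto

lemma lookup_tensor_ops: "Poly_Mapping.lookup (tensor_ops eta k r fs) g =
   (\<Sum>als\<in>listset (map Poly_Mapping.keys fs). if sprod als = g then eta k r als (map2 Poly_Mapping.lookup fs als) else 0)"
  unfolding tensor_ops_def lookup_sum lookup_single by (simp add: when_def)

lemma expand:
  assumes mlall: "\<And>k r als. 1 \<le> r \<Longrightarrow> r \<le> k \<Longrightarrow> length als = k \<Longrightarrow> multilinear sc sc k (eta k r als)"
  and n: "length mid = n" "1 \<le> n" and K: "K = length pre + 1 + length suf"
  and R: "1 \<le> R" "R \<le> K"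
  shows "tensor_ops eta K R (pre @ [\<Sum>s\<in>Rs. tensor_ops eta n s mid] @ suf)
   = (\<Sum>a\<in>listset (map Poly_Mapping.keys pre). \<Sum>b\<in>listset (map Poly_Mapping.keys mid). \<Sum>c\<in>listset (map Poly_Mapping.keys suf).
        Poly_Mapping.single (sprod (a @ b @ c))
          (eta K R (a @ [sprod b] @ c)
             (map2 Poly_Mapping.lookup pre a @ [\<Sum>s\<in>Rs. eta n s b (map2 Poly_Mapping.lookup mid b)] @ map2 Poly_Mapping.lookup suf c)))"
proof -
  define M where "M = (\<Sum>s\<in>Rs. tensor_ops eta n s mid)"
  define S0 where "S0 = sprod ` listset (map Poly_Mapping.keys mid)"
  have finS0: "finite S0" unfolding S0_def by (rule finite_imageI, rule finite_listset) auto
  have kM: "Poly_Mapping.keys M \<subseteq> S0" unfolding M_def S0_def using keys_sum keys_tensor_ops by fastforce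
  define Ls where "Ls = map Poly_Mapping.keys pre @ [S0] @ map Poly_Mapping.keys suf"
  have mlh: "\<And>als. length als = K \<Longrightarrow> multilinear sc sc K (eta K R als)" using mlall R by blast
  have finL: "\<forall>X\<in>set Ls. finite X" unfolding Ls_def using finS0 by auto
  have "tensor_ops eta K R (pre @ [M] @ suf) =
     (\<Sum>als\<in>listset Ls. Poly_Mapping.single (sprod als) (eta K R als (map2 Poly_Mapping.lookup (pre @ [M] @ suf) als)))"
  proof (rule tensor_ops_superset[where eta=eta and k=K and r=R, OF mlh])
    show "\<forall>j<K. Poly_Mapping.keys ((pre @ [M] @ suf) ! j) \<subseteq> Ls ! j"
      using kM unfolding Ls_def K by (auto simp: nth_append nth_Cons split: nat.splits)
  qed (use K finL in \<open>auto simp: Ls_def\<close>)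
  also have "\<dots> = (\<Sum>a\<in>listset (map Poly_Mapping.keys pre). \<Sum>g\<in>S0. \<Sum>c\<in>listset (map Poly_Mapping.keys suf).
      Poly_Mapping.single (sprod (a @ [g] @ c)) (eta K R (a @ [g] @ c) (map2 Poly_Mapping.lookup pre a @ [Poly_Mapping.lookup M g] @ map2 Poly_Mapping.lookup suf c)))"
    unfolding Ls_def
    apply (subst sum_listset_append, simp, use finS0 in simp)
    apply (subst sum_listset_append, use finS0 in simp, simp)
    apply (simp only: sum_listset_single)
    apply (intro sum.cong refl)
    apply (simp add: listset_length)
    done
  also have "\<dots> = (\<Sum>a\<in>listset (map Poly_Mapping.keys pre). \<Sum>b\<in>listset (map Poly_Mapping.keys mid). \<Sum>c\<in>listset (map Poly_Mapping.keys suf).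
        Poly_Mapping.single (sprod (a @ b @ c))
          (eta K R (a @ [sprod b] @ c)
             (map2 Poly_Mapping.lookup pre a @ [\<Sum>s\<in>Rs. eta n s b (map2 Poly_Mapping.lookup mid b)] @ map2 Poly_Mapping.lookup suf c)))"
  proof (rule sum.cong[OF refl])
    fix a assume a: "a \<in> listset (map Poly_Mapping.keys pre)"
    show "(\<Sum>g\<in>S0. \<Sum>c\<in>listset (map Poly_Mapping.keys suf).
      Poly_Mapping.single (sprod (a @ [g] @ c)) (eta K R (a @ [g] @ c) (map2 Poly_Mapping.lookup pre a @ [Poly_Mapping.lookup M g] @ map2 Poly_Mapping.lookup suf c)))
      = (\<Sum>b\<in>listset (map Poly_Mapping.keys mid). \<Sum>c\<in>listset (map Poly_Mapping.keys suf).
        Poly_Mapping.single (sprod (a @ b @ c))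
          (eta K R (a @ [sprod b] @ c)
             (map2 Poly_Mapping.lookup pre a @ [\<Sum>s\<in>Rs. eta n s b (map2 Poly_Mapping.lookup mid b)] @ map2 Poly_Mapping.lookup suf c)))"
      (is "?L = ?R")
    proof -
      define Y where "Y b = (\<Sum>s\<in>Rs. eta n s b (map2 Poly_Mapping.lookup mid b))" for b
      have lM: "Poly_Mapping.lookup M g = (\<Sum>b\<in>listset (map Poly_Mapping.keys mid). if sprod b = g then Y b else 0)" for g
        unfolding M_def lookup_sum lookup_tensor_ops Y_def
        by (subst sum.swap) (intro sum.cong refl, auto)
      have step: "eta K R (a @ [g] @ c) (map2 Poly_Mapping.lookup pre a @ [Poly_Mapping.lookup M g] @ map2 Poly_Mapping.lookup suf c)
         = (\<Sum>b\<in>listset (map Poly_Mapping.keys mid). if sprod b = g then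
             eta K R (a @ [g] @ c) (map2 Poly_Mapping.lookup pre a @ [Y b] @ map2 Poly_Mapping.lookup suf c) else 0)"
        if c: "c \<in> listset (map Poly_Mapping.keys suf)" for g c
      proof -
        define xs where "xs = map2 Poly_Mapping.lookup pre a @ [0] @ map2 Poly_Mapping.lookup suf c"
        have la: "length a = length pre" "length c = length suf" using a c by (auto simp: listset_length)
        have lxs: "length xs = K" "length pre < K" using la K by (auto simp: xs_def)
        have upd: "xs[length pre := v] = map2 Poly_Mapping.lookup pre a @ [v] @ map2 Poly_Mapping.lookup suf c" for v
          using la by (simp add: xs_def list_update_append)
        have mlg: "multilinear sc sc K (eta K R (a @ [g] @ c))" using mlh la K by simp
        have "eta K R (a @ [g] @ c) (map2 Poly_Mapping.lookup pre a @ [Poly_Mapping.lookup M g] @ map2 Poly_Mapping.lookup suf c)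
          = (\<Sum>b\<in>listset (map Poly_Mapping.keys mid). eta K R (a @ [g] @ c) (xs[length pre := (if sprod b = g then Y b else 0)]))"
          unfolding lM upd[symmetric] by (rule ml_sum[OF mlg lxs])
        also have "\<dots> = (\<Sum>b\<in>listset (map Poly_Mapping.keys mid). if sprod b = g then
             eta K R (a @ [g] @ c) (map2 Poly_Mapping.lookup pre a @ [Y b] @ map2 Poly_Mapping.lookup suf c) else 0)"
        proof -
          have z: "eta K R (a @ [g] @ c) (map2 Poly_Mapping.lookup pre a @ [0] @ map2 Poly_Mapping.lookup suf c) = 0"
            using ml_zero[OF mlg lxs] upd by metis
          show ?thesis using z by (intro sum.cong refl) (simp add: upd)
        qed
        finally show ?thesis .
      qed
      have "?L = (\<Sum>g\<in>S0. \<Sum>c\<in>listset (map Poly_Mapping.keys suf). \<Sum>b\<in>listset (map Poly_Mapping.keys mid).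
          if sprod b = g then Poly_Mapping.single (sprod (a @ [g] @ c))
             (eta K R (a @ [g] @ c) (map2 Poly_Mapping.lookup pre a @ [Y b] @ map2 Poly_Mapping.lookup suf c)) else 0)"
        apply (intro sum.cong refl)
        apply (subst step, assumption)
        apply (simp only: single_sum)
        apply (intro sum.cong refl)
        apply simp
        done
      also have "\<dots> = (\<Sum>b\<in>listset (map Poly_Mapping.keys mid). \<Sum>c\<in>listset (map Poly_Mapping.keys suf). \<Sum>g\<in>S0.
          if sprod b = g then Poly_Mapping.single (sprod (a @ [g] @ c))
             (eta K R (a @ [g] @ c) (map2 Poly_Mapping.lookup pre a @ [Y b] @ map2 Poly_Mapping.lookup suf c)) else 0)"
        by (subst sum.swap, subst sum.swap) (simp add: sum.swap[of _ S0])
      also have "\<dots> = ?R"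
      proof (intro sum.cong refl)
        fix b c assume b: "b \<in> listset (map Poly_Mapping.keys mid)"
        have bne: "b \<noteq> []" using listset_length[OF b] n by auto
        have "sprod b \<in> S0" using b by (simp add: S0_def)
        then show "(\<Sum>g\<in>S0. if sprod b = g then Poly_Mapping.single (sprod (a @ [g] @ c))
             (eta K R (a @ [g] @ c) (map2 Poly_Mapping.lookup pre a @ [Y b] @ map2 Poly_Mapping.lookup suf c)) else 0) =
          Poly_Mapping.single (sprod (a @ b @ c))
          (eta K R (a @ [sprod b] @ c)
             (map2 Poly_Mapping.lookup pre a @ [\<Sum>s\<in>Rs. eta n s b (map2 Poly_Mapping.lookup mid b)] @ map2 Poly_Mapping.lookup suf c))"
          using finS0 bne sprod_mid[OF bne, of a c] by (simp add: sum.delta Y_def)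
      qed
      finally show ?thesis .
    qed
  qed
  finally show ?thesis unfolding M_def .
qed



lemma R0_range: "1 \<le> r \<Longrightarrow> r \<le> N \<Longrightarrow> 1 \<le> n \<Longrightarrow> 1 \<le> i \<Longrightarrow> i \<le> N + 1 - n \<Longrightarrow>
  1 \<le> R0 (N + 1 - n) n i r \<and> R0 (N + 1 - n) n i r \<le> N + 1 - n"
  unfolding R0_def by auto

lemma sgnapp_sum: "sgnapp i n ds (\<Sum>x\<in>A. Poly_Mapping.single (h x) (f x)) =
   (\<Sum>x\<in>A. Poly_Mapping.single (h x) (sgnapp i n ds (f x)))"
  unfolding sgnapp_def by (auto simp: sum_negf single_uminus)

lemma identity_part:
  assumes DF: "dend_family_algebra sc G eta"
  and N: "1 \<le> N" "1 \<le> r" "r \<le> N" "length bs = N" "length ds = N"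
  and bsG: "\<forall>j<N. bs!j \<in> tensor_grading G (ds!j)"
  shows "(\<Sum>n\<in>{1..N}. \<Sum>i\<in>{1..N + 1 - n}. sgnapp i n ds
      (tensor_ops eta (N + 1 - n) (R0 (N + 1 - n) n i r)
        (take (i - 1) bs @ [(\<Sum>s\<in>Ri (N + 1 - n) n i r. tensor_ops eta n s (take n (drop (i - 1) bs)))]
           @ drop (i - 1 + n) bs))) = 0"
proof -
  have mlall: "\<And>k r als. 1 \<le> r \<Longrightarrow> r \<le> k \<Longrightarrow> length als = k \<Longrightarrow> multilinear sc sc k (eta k r als)"
    using DF unfolding dend_family_algebra_def by blast
  have FI: "\<And>als xs. length als = N \<Longrightarrow> length xs = N \<Longrightarrow> (\<forall>j<N. xs ! j \<in> G (ds ! j)) \<Longrightarrow>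
        (\<Sum>n\<in>{1..N}. \<Sum>i\<in>{1..N + 1 - n}.
           sgnapp i n ds
             (eta (N + 1 - n) (R0 (N + 1 - n) n i r)
                (take (i - 1) als @ [sprod (take n (drop (i - 1) als))] @ drop (i - 1 + n) als)
                (take (i - 1) xs @
                   [(\<Sum>s\<in>Ri (N + 1 - n) n i r. eta n s (take n (drop (i - 1) als)) (take n (drop (i - 1) xs)))]
                   @ drop (i - 1 + n) xs))) = 0"
    using DF N unfolding dend_family_algebra_def by blast
  define E where "E n i als = (let xs = map2 Poly_Mapping.lookup bs als in
             eta (N + 1 - n) (R0 (N + 1 - n) n i r)
                (take (i - 1) als @ [sprod (take n (drop (i - 1) als))] @ drop (i - 1 + n) als)
                (take (i - 1) xs @
                   [(\<Sum>s\<in>Ri (N + 1 - n) n i r. eta n s (take n (drop (i - 1) als)) (take n (drop (i - 1) xs)))]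
                   @ drop (i - 1 + n) xs))" for n i als
  define L where "L = listset (map Poly_Mapping.keys bs)"
  have A: "tensor_ops eta (N + 1 - n) (R0 (N + 1 - n) n i r)
        (take (i - 1) bs @ [(\<Sum>s\<in>Ri (N + 1 - n) n i r. tensor_ops eta n s (take n (drop (i - 1) bs)))]
           @ drop (i - 1 + n) bs) = (\<Sum>als\<in>L. Poly_Mapping.single (sprod als) (E n i als))"
    if ni: "n \<in> {1..N}" "i \<in> {1..N + 1 - n}" for n i
  proof -
    define pre where "pre = take (i - 1) bs"
    define mid where "mid = take n (drop (i - 1) bs)"
    define suf where "suf = drop (i - 1 + n) bs"
    have lens: "length pre = i - 1" "length mid = n" "length suf = N + 1 - n - i"
      using ni N by (auto simp: pre_def mid_def suf_def)
    have bs: "bs = pre @ mid @ suf" unfolding pre_def mid_def suf_def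
      by (metis append_take_drop_id drop_drop add.commute)
    have "tensor_ops eta (N + 1 - n) (R0 (N + 1 - n) n i r)
        (pre @ [(\<Sum>s\<in>Ri (N + 1 - n) n i r. tensor_ops eta n s mid)] @ suf)
      = (\<Sum>a\<in>listset (map Poly_Mapping.keys pre). \<Sum>b\<in>listset (map Poly_Mapping.keys mid). \<Sum>c\<in>listset (map Poly_Mapping.keys suf).
        Poly_Mapping.single (sprod (a @ b @ c))
          (eta (N + 1 - n) (R0 (N + 1 - n) n i r) (a @ [sprod b] @ c)
             (map2 Poly_Mapping.lookup pre a @ [\<Sum>s\<in>Ri (N + 1 - n) n i r. eta n s b (map2 Poly_Mapping.lookup mid b)] @ map2 Poly_Mapping.lookup suf c)))"
      by (rule expand[OF mlall]) (use ni N lens R0_range[of r N n i] in auto)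
    also have "\<dots> = (\<Sum>als\<in>L. Poly_Mapping.single (sprod als) (E n i als))"
      unfolding L_def
      apply (subst bs)
      apply (simp only: map_append)
      apply (subst sum_listset_append, auto)[1]
      apply (subst sum_listset_append, auto)[1]
      apply (intro sum.cong refl)
      subgoal premises p for a b c
      proof -
        have la: "length a = i - 1" "length b = n" "length c = N + 1 - n - i"
          using listset_length[OF p(1)] listset_length[OF p(2)] listset_length[OF p(3)] lens by auto
        have m: "map2 Poly_Mapping.lookup bs (a @ b @ c) = map2 Poly_Mapping.lookup pre a @
            map2 Poly_Mapping.lookup mid b @ map2 Poly_Mapping.lookup suf c"
          by (subst bs) (simp add: la lens)
        show ?thesis by (simp add: E_def Let_def m la lens)
      qed
      done
    finally show ?thesis unfolding pre_def mid_def suf_def .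
  qed
  have "(\<Sum>n\<in>{1..N}. \<Sum>i\<in>{1..N + 1 - n}. sgnapp i n ds
      (tensor_ops eta (N + 1 - n) (R0 (N + 1 - n) n i r)
        (take (i - 1) bs @ [(\<Sum>s\<in>Ri (N + 1 - n) n i r. tensor_ops eta n s (take n (drop (i - 1) bs)))]
           @ drop (i - 1 + n) bs))) =
     (\<Sum>n\<in>{1..N}. \<Sum>i\<in>{1..N + 1 - n}. \<Sum>als\<in>L. Poly_Mapping.single (sprod als) (sgnapp i n ds (E n i als)))"
    apply (intro sum.cong refl)
    subgoal premises p for n i by (simp only: A[OF p] sgnapp_sum)
    done
  also have "\<dots> = (\<Sum>als\<in>L. Poly_Mapping.single (sprod als) (\<Sum>n\<in>{1..N}. \<Sum>i\<in>{1..N + 1 - n}. sgnapp i n ds (E n i als)))"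
    by (simp add: single_sum sum.swap[of _ L])
  also have "\<dots> = 0"
  proof (intro sum.neutral ballI)
    fix als assume als: "als \<in> L"
    have la: "length als = N" using listset_length[OF als[unfolded L_def]] N by simp
    have G: "\<forall>j<N. map2 Poly_Mapping.lookup bs als ! j \<in> G (ds ! j)"
      using bsG la N by (auto simp: tensor_grading_def)
    show "Poly_Mapping.single (sprod als) (\<Sum>n\<in>{1..N}. \<Sum>i\<in>{1..N + 1 - n}. sgnapp i n ds (E n i als)) = 0"
      using FI[OF la _ G] la N by (simp add: E_def Let_def)
  qed
  finally show ?thesis .
qed



lemma lookup_tscale: "module sc \<Longrightarrow> Poly_Mapping.lookup (tensor_scale sc c f) w = sc c (Poly_Mapping.lookup f w)"
  unfolding tensor_scale_def by (simp add: Poly_Mapping.map.rep_eq when_def module.scale_zero_right)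

lemma keys_tscale: "module sc \<Longrightarrow> Poly_Mapping.keys (tensor_scale sc c f) \<subseteq> Poly_Mapping.keys f"
  by (auto simp: in_keys_iff lookup_tscale module.scale_zero_right)

lemma tscale_sum_single: "module sc \<Longrightarrow> tensor_scale sc c (\<Sum>a\<in>A. Poly_Mapping.single (h a) (f a)) =
    (\<Sum>a\<in>A. Poly_Mapping.single (h a) (sc c (f a)))"
  by (rule poly_mapping_eqI) (simp add: lookup_tscale lookup_sum lookup_single when_def
      module.scale_sum_right if_distrib[of "sc c"] module.scale_zero_right cong: if_cong)

lemma DF_ml: "dend_family_algebra sc G eta \<Longrightarrow> 1 \<le> r \<Longrightarrow> r \<le> k \<Longrightarrow> length als = k \<Longrightarrow>
   multilinear sc sc k (eta k r als)"
  unfolding dend_family_algebra_def by (drule conjunct1[OF conjunct2]) blast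

lemma DF_gm: "dend_family_algebra sc G eta \<Longrightarrow> graded_module sc G"
  unfolding dend_family_algebra_def by (rule conjunct1)

lemma ml_add: "multilinear sA sB n f \<Longrightarrow> length xs = n \<Longrightarrow> j < n \<Longrightarrow>
  f (xs[j := x + y]) = f (xs[j := x]) + f (xs[j := y])"
  unfolding multilinear_def by blast

lemma ml_scale: "multilinear sA sB n f \<Longrightarrow> length xs = n \<Longrightarrow> j < n \<Longrightarrow>
  f (xs[j := sA c x]) = sB c (f (xs[j := x]))"
  unfolding multilinear_def by blast

lemma ml_part:
  fixes eta :: "nat \<Rightarrow> nat \<Rightarrow> 'w::semigroup_mult list \<Rightarrow> 'a::ab_group_add list \<Rightarrow> 'a"
  assumes DF: "dend_family_algebra sc G eta" and r: "1 \<le> r" "r \<le> k"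
  shows "multilinear (tensor_scale sc) (tensor_scale sc) k (tensor_ops eta k r)"
  unfolding multilinear_def
proof (intro allI impI)
  fix xs :: "('w \<Rightarrow>\<^sub>0 'a) list" and j and x y :: "'w \<Rightarrow>\<^sub>0 'a" and c assume a: "length xs = k \<and> j < k"
  have mlh: "\<And>als. length als = k \<Longrightarrow> multilinear sc sc k (eta k r als)"
    using DF_ml[OF DF r] by blast
  have M: "module sc" using DF_gm[OF DF] unfolding graded_module_def by (rule conjunct1)
  define Ls where "Ls = (map Poly_Mapping.keys xs)[j := Poly_Mapping.keys x \<union> Poly_Mapping.keys y]"
  have "set Ls \<subseteq> insert (Poly_Mapping.keys x \<union> Poly_Mapping.keys y) (set (map Poly_Mapping.keys xs))"
    unfolding Ls_def by (rule set_update_subset_insert)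
  then have finL: "\<forall>X\<in>set Ls. finite X" by auto
  have lL: "length Ls = k" using a by (simp add: Ls_def)
  have e: "tensor_ops eta k r (xs[j := v]) = (\<Sum>als\<in>listset Ls. Poly_Mapping.single (sprod als)
      (eta k r als ((map2 Poly_Mapping.lookup xs als)[j := Poly_Mapping.lookup v (als ! j)])))"
    if v: "Poly_Mapping.keys v \<subseteq> Poly_Mapping.keys x \<union> Poly_Mapping.keys y" for v
  proof -
    have "tensor_ops eta k r (xs[j := v]) = (\<Sum>als\<in>listset Ls. Poly_Mapping.single (sprod als)
      (eta k r als (map2 Poly_Mapping.lookup (xs[j := v]) als)))"
    proof (rule tensor_ops_superset[where eta=eta and k=k and r=r, OF mlh lL _ _ finL])
      show "length (xs[j := v]) = k" using a by simp
      show "\<forall>i<k. Poly_Mapping.keys (xs[j := v] ! i) \<subseteq> Ls ! i"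
      proof (intro allI impI)
        fix i assume "i < k"
        then show "Poly_Mapping.keys (xs[j := v] ! i) \<subseteq> Ls ! i"
          using a v unfolding Ls_def by (cases "i = j") simp_all
      qed
    qed
    also have "\<dots> = (\<Sum>als\<in>listset Ls. Poly_Mapping.single (sprod als)
      (eta k r als ((map2 Poly_Mapping.lookup xs als)[j := Poly_Mapping.lookup v (als ! j)])))"
    proof (intro sum.cong refl)
      fix als assume "als \<in> listset Ls"
      then have "length als = length xs" using listset_length lL a by metis
      then show "Poly_Mapping.single (sprod als) (eta k r als (map2 Poly_Mapping.lookup (xs[j := v]) als)) =
        Poly_Mapping.single (sprod als) (eta k r als ((map2 Poly_Mapping.lookup xs als)[j := Poly_Mapping.lookup v (als ! j)]))"
        using a by (simp add: map2_update)
    qed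
    finally show ?thesis .
  qed
  have kxy: "Poly_Mapping.keys (x + y) \<subseteq> Poly_Mapping.keys x \<union> Poly_Mapping.keys y"
    by (auto simp: in_keys_iff lookup_add)
  have "tensor_ops eta k r (xs[j := x + y]) = tensor_ops eta k r (xs[j := x]) + tensor_ops eta k r (xs[j := y])"
    unfolding e[OF kxy] e[of x, OF Un_upper1] e[of y, OF Un_upper2] sum.distrib[symmetric] single_add[symmetric]
  proof (intro sum.cong refl arg_cong[where f="Poly_Mapping.single _"])
    fix als assume als: "als \<in> listset Ls"
    have "length (map2 Poly_Mapping.lookup xs als) = k" using a listset_length[OF als] lL by simp
    moreover have "j < k" using a by simp
    ultimately show "eta k r als ((map2 Poly_Mapping.lookup xs als)[j := Poly_Mapping.lookup (x + y) (als ! j)]) =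
         eta k r als ((map2 Poly_Mapping.lookup xs als)[j := Poly_Mapping.lookup x (als ! j)]) +
         eta k r als ((map2 Poly_Mapping.lookup xs als)[j := Poly_Mapping.lookup y (als ! j)])"
      unfolding lookup_add by (rule ml_add[OF mlh[OF listset_length[OF als, unfolded lL]]])
  qed
  moreover
  have kc: "Poly_Mapping.keys (tensor_scale sc c x) \<subseteq> Poly_Mapping.keys x \<union> Poly_Mapping.keys y"
    by (rule order.trans[OF keys_tscale[OF M] Un_upper1])
  have "tensor_ops eta k r (xs[j := tensor_scale sc c x]) = tensor_scale sc c (tensor_ops eta k r (xs[j := x]))"
    unfolding e[OF kc] e[of x, OF Un_upper1] tscale_sum_single[OF M]
  proof (intro sum.cong refl arg_cong[where f="Poly_Mapping.single _"])
    fix als assume als: "als \<in> listset Ls"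
    have "length (map2 Poly_Mapping.lookup xs als) = k" using a listset_length[OF als] lL by simp
    moreover have "j < k" using a by simp
    ultimately show "eta k r als ((map2 Poly_Mapping.lookup xs als)[j := Poly_Mapping.lookup (tensor_scale sc c x) (als ! j)]) =
         sc c (eta k r als ((map2 Poly_Mapping.lookup xs als)[j := Poly_Mapping.lookup x (als ! j)]))"
      unfolding lookup_tscale[OF M] by (rule ml_scale[OF mlh[OF listset_length[OF als, unfolded lL]]])
  qed
  ultimately show "tensor_ops eta k r (xs[j := x + y]) = tensor_ops eta k r (xs[j := x]) + tensor_ops eta k r (xs[j := y]) \<and>
       tensor_ops eta k r (xs[j := tensor_scale sc c x]) = tensor_scale sc c (tensor_ops eta k r (xs[j := x]))" by blast
qed

lemma closed_sum: "0 \<in> S \<Longrightarrow> (\<forall>x\<in>S. \<forall>y\<in>S. x + y \<in> S) \<Longrightarrow> (\<forall>a\<in>A. f a \<in> S) \<Longrightarrow> sum f A \<in> S"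
  by (induction A rule: infinite_finite_induct) auto

lemma deg_part:
  assumes DF: "dend_family_algebra sc G eta" and r: "1 \<le> r" "r \<le> k"
  and l: "length bs = k" "length ds = k" and bsG: "\<forall>j<k. bs ! j \<in> tensor_grading G (ds ! j)"
  shows "tensor_ops eta k r bs \<in> tensor_grading G (sum_list ds + int k - 2)"
proof -
  have gm: "graded_module sc G" using DF unfolding dend_family_algebra_def by blast
  have deg: "\<And>als xs. length als = k \<Longrightarrow> length xs = k \<Longrightarrow> (\<forall>j<k. xs ! j \<in> G (ds ! j)) \<Longrightarrow>
      eta k r als xs \<in> G (sum_list ds + int k - 2)"
    using DF r l unfolding dend_family_algebra_def by blast
  have cl: "0 \<in> G d" "\<forall>x\<in>G d. \<forall>y\<in>G d. x + y \<in> G d" for d using gm unfolding graded_module_def by auto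
  have "Poly_Mapping.lookup (tensor_ops eta k r bs) w \<in> G (sum_list ds + int k - 2)" for w
    unfolding lookup_tensor_ops
  proof (rule closed_sum[OF cl], rule ballI)
    fix als assume als: "als \<in> listset (map Poly_Mapping.keys bs)"
    have la: "length als = k" using listset_length[OF als] l by simp
    have "eta k r als (map2 Poly_Mapping.lookup bs als) \<in> G (sum_list ds + int k - 2)"
      by (rule deg) (use la l bsG in \<open>auto simp: tensor_grading_def\<close>)
    then show "(if sprod als = w then eta k r als (map2 Poly_Mapping.lookup bs als) else 0) \<in> G (sum_list ds + int k - 2)"
      using cl by auto
  qed
  then show ?thesis unfolding tensor_grading_def by blast
qed



lemma sum_keys_superset: "finite S \<Longrightarrow> Poly_Mapping.keys e \<subseteq> S \<Longrightarrow>
   (\<Sum>d\<in>S. Poly_Mapping.lookup e d) = (\<Sum>d\<in>Poly_Mapping.keys e. Poly_Mapping.lookup e d)"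
  by (rule sum.mono_neutral_right) (auto simp: in_keys_iff)

lemma gm_part:
  fixes sc :: "'k::comm_ring_1 \<Rightarrow> 'a::ab_group_add \<Rightarrow> 'a" and G :: "int \<Rightarrow> 'a set"
  assumes gm: "graded_module sc G"
  shows "graded_module (tensor_scale sc) (tensor_grading G :: int \<Rightarrow> ('w \<Rightarrow>\<^sub>0 'a) set)"
proof -
  have M: "module sc" using gm unfolding graded_module_def by (rule conjunct1)
  have cl: "\<forall>d. 0 \<in> G d \<and> (\<forall>x\<in>G d. \<forall>y\<in>G d. x + y \<in> G d) \<and> (\<forall>c. \<forall>x\<in>G d. sc c x \<in> G d)"
    using gm unfolding graded_module_def by (elim conjE)
  have U: "\<forall>x. \<exists>!c :: int \<Rightarrow>\<^sub>0 'a. (\<forall>d. Poly_Mapping.lookup c d \<in> G d) \<and> x = (\<Sum>d\<in>Poly_Mapping.keys c. Poly_Mapping.lookup c d)"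
    using gm unfolding graded_module_def by (elim conjE)
  define P where "P x c \<longleftrightarrow> (\<forall>d. Poly_Mapping.lookup c d \<in> G d) \<and> x = (\<Sum>d\<in>Poly_Mapping.keys c. Poly_Mapping.lookup c d)"
    for x :: 'a and c :: "int \<Rightarrow>\<^sub>0 'a"
  define dec where "dec x = (THE c. P x c)" for x
  have U1: "\<exists>!c. P x c" for x unfolding P_def using U by (rule spec)
  have Pdec: "P x (dec x)" for x unfolding dec_def by (rule theI'[OF U1])
  have Puniq: "P x c \<Longrightarrow> c = dec x" for x c unfolding dec_def by (rule the1_equality[OF U1, symmetric])
  have dec0: "dec 0 = 0" using Puniq[of 0 0] cl by (simp add: P_def)
  have mod: "module (tensor_scale sc :: 'k \<Rightarrow> ('w \<Rightarrow>\<^sub>0 'a) \<Rightarrow> _)"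
  proof
    fix a b :: 'k and x y :: "'w \<Rightarrow>\<^sub>0 'a"
    show "tensor_scale sc a (x + y) = tensor_scale sc a x + tensor_scale sc a y"
      by (rule poly_mapping_eqI) (simp add: lookup_tscale[OF M] lookup_add module.scale_right_distrib[OF M])
    show "tensor_scale sc (a + b) x = tensor_scale sc a x + tensor_scale sc b x"
      by (rule poly_mapping_eqI) (simp add: lookup_tscale[OF M] lookup_add module.scale_left_distrib[OF M])
    show "tensor_scale sc a (tensor_scale sc b x) = tensor_scale sc (a * b) x"
      by (rule poly_mapping_eqI) (simp add: lookup_tscale[OF M] module.scale_scale[OF M])
    show "tensor_scale sc 1 x = x"
      by (rule poly_mapping_eqI) (simp add: lookup_tscale[OF M] module.scale_one[OF M])
  qed
  have cl2: "\<forall>d. 0 \<in> (tensor_grading G d :: ('w \<Rightarrow>\<^sub>0 'a) set) \<and> (\<forall>x\<in>tensor_grading G d. \<forall>y\<in>tensor_grading G d. x + y \<in> tensor_grading G d) \<and>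
     (\<forall>c. \<forall>x\<in>tensor_grading G d. tensor_scale sc c x \<in> tensor_grading G d)"
    using cl by (auto simp: tensor_grading_def lookup_add lookup_tscale[OF M])
  have U2: "\<exists>!c :: int \<Rightarrow>\<^sub>0 ('w \<Rightarrow>\<^sub>0 'a). (\<forall>d. Poly_Mapping.lookup c d \<in> tensor_grading G d) \<and>
      f = (\<Sum>d\<in>Poly_Mapping.keys c. Poly_Mapping.lookup c d)" for f :: "'w \<Rightarrow>\<^sub>0 'a"
  proof -
    define C where "C d = Abs_poly_mapping (\<lambda>w. Poly_Mapping.lookup (dec (Poly_Mapping.lookup f w)) d)" for d
    have finC: "finite {w. Poly_Mapping.lookup (dec (Poly_Mapping.lookup f w)) d \<noteq> 0}" for d
    proof (rule finite_subset[of _ "Poly_Mapping.keys f"])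
      show "{w. Poly_Mapping.lookup (dec (Poly_Mapping.lookup f w)) d \<noteq> 0} \<subseteq> Poly_Mapping.keys f"
        using dec0 by (auto simp: in_keys_iff)
    qed simp
    have lC: "Poly_Mapping.lookup (C d) w = Poly_Mapping.lookup (dec (Poly_Mapping.lookup f w)) d" for d w
      unfolding C_def using finC by simp
    have finC2: "finite {d. C d \<noteq> 0}"
    proof (rule finite_subset[of _ "\<Union>w\<in>Poly_Mapping.keys f. Poly_Mapping.keys (dec (Poly_Mapping.lookup f w))"])
      show "{d. C d \<noteq> 0} \<subseteq> (\<Union>w\<in>Poly_Mapping.keys f. Poly_Mapping.keys (dec (Poly_Mapping.lookup f w)))"
      proof
        fix d assume "d \<in> {d. C d \<noteq> 0}"
        then obtain w where "Poly_Mapping.lookup (C d) w \<noteq> 0"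
          by (metis mem_Collect_eq poly_mapping_eqI lookup_zero)
        then show "d \<in> (\<Union>w\<in>Poly_Mapping.keys f. Poly_Mapping.keys (dec (Poly_Mapping.lookup f w)))"
          using dec0 by (auto simp: lC in_keys_iff intro!: bexI[of _ w])
      qed
    qed simp
    define c where "c = Abs_poly_mapping C"
    have lc: "Poly_Mapping.lookup (Poly_Mapping.lookup c d) w = Poly_Mapping.lookup (dec (Poly_Mapping.lookup f w)) d" for d w
      unfolding c_def using finC2 by (simp add: lC)
    have keysub: "Poly_Mapping.keys (dec (Poly_Mapping.lookup f w)) \<subseteq> Poly_Mapping.keys c" for w
    proof
      fix d assume "d \<in> Poly_Mapping.keys (dec (Poly_Mapping.lookup f w))"
      then have "Poly_Mapping.lookup (Poly_Mapping.lookup c d) w \<noteq> 0" by (simp add: lc in_keys_iff)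
      then show "d \<in> Poly_Mapping.keys c" by (auto simp: in_keys_iff)
    qed
    show ?thesis
    proof (rule ex1I[of _ c])
      show "(\<forall>d. Poly_Mapping.lookup c d \<in> tensor_grading G d) \<and> f = (\<Sum>d\<in>Poly_Mapping.keys c. Poly_Mapping.lookup c d)"
      proof
        show "\<forall>d. Poly_Mapping.lookup c d \<in> tensor_grading G d"
          using Pdec by (auto simp: tensor_grading_def lc P_def)
        show "f = (\<Sum>d\<in>Poly_Mapping.keys c. Poly_Mapping.lookup c d)"
        proof (rule poly_mapping_eqI)
          fix w
          have "(\<Sum>d\<in>Poly_Mapping.keys c. Poly_Mapping.lookup (dec (Poly_Mapping.lookup f w)) d)
              = (\<Sum>d\<in>Poly_Mapping.keys (dec (Poly_Mapping.lookup f w)). Poly_Mapping.lookup (dec (Poly_Mapping.lookup f w)) d)"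
            by (rule sum_keys_superset[OF _ keysub]) simp
          also have "\<dots> = Poly_Mapping.lookup f w" using Pdec[of "Poly_Mapping.lookup f w"] by (simp add: P_def)
          finally show "Poly_Mapping.lookup f w = Poly_Mapping.lookup (\<Sum>d\<in>Poly_Mapping.keys c. Poly_Mapping.lookup c d) w"
            by (simp add: lookup_sum lc)
        qed
      qed
    next
      fix c' :: "int \<Rightarrow>\<^sub>0 ('w \<Rightarrow>\<^sub>0 'a)"
      assume c': "(\<forall>d. Poly_Mapping.lookup c' d \<in> tensor_grading G d) \<and> f = (\<Sum>d\<in>Poly_Mapping.keys c'. Poly_Mapping.lookup c' d)"
      have "Poly_Mapping.lookup (Poly_Mapping.lookup c' d) w = Poly_Mapping.lookup (dec (Poly_Mapping.lookup f w)) d" for d w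
      proof -
        define e where "e = Abs_poly_mapping (\<lambda>d. Poly_Mapping.lookup (Poly_Mapping.lookup c' d) w)"
        have fin: "finite {d. Poly_Mapping.lookup (Poly_Mapping.lookup c' d) w \<noteq> 0}"
          by (rule finite_subset[of _ "Poly_Mapping.keys c'"]) (auto simp: in_keys_iff)
        have le: "Poly_Mapping.lookup e d = Poly_Mapping.lookup (Poly_Mapping.lookup c' d) w" for d
          unfolding e_def using fin by simp
        have ke: "Poly_Mapping.keys e \<subseteq> Poly_Mapping.keys c'"
          by (auto simp: in_keys_iff le)
        have "P (Poly_Mapping.lookup f w) e"
          unfolding P_def
        proof
          show "\<forall>d. Poly_Mapping.lookup e d \<in> G d" using c' by (simp add: le tensor_grading_def)
          have "Poly_Mapping.lookup f w = (\<Sum>d\<in>Poly_Mapping.keys c'. Poly_Mapping.lookup e d)"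
            using c' by (metis (no_types, lifting) le lookup_sum sum.cong)
          also have "\<dots> = (\<Sum>d\<in>Poly_Mapping.keys e. Poly_Mapping.lookup e d)"
            by (rule sum_keys_superset[OF _ ke]) simp
          finally show "Poly_Mapping.lookup f w = (\<Sum>d\<in>Poly_Mapping.keys e. Poly_Mapping.lookup e d)" .
        qed
        then have "e = dec (Poly_Mapping.lookup f w)" by (rule Puniq)
        then show ?thesis using le by metis
      qed
      then show "c' = c" by (intro poly_mapping_eqI) (simp add: lc)
    qed
  qed
  show ?thesis unfolding graded_module_def by (intro conjI mod cl2 allI U2)
qed


theorem theorem5p9:
  fixes sc :: "'k::{comm_ring_1, ring_char_0} \<Rightarrow> 'a::ab_group_add \<Rightarrow> 'a"
    and G :: "int \<Rightarrow> 'a set"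
    and eta :: "nat \<Rightarrow> nat \<Rightarrow> 'w::semigroup_mult list \<Rightarrow> 'a list \<Rightarrow> 'a"
  assumes "dend_family_algebra sc G eta"
  shows "dend_algebra (tensor_scale sc) (tensor_grading G) (tensor_ops eta)"
  unfolding dend_algebra_def
proof (intro conjI allI impI)
  show "graded_module (tensor_scale sc) (tensor_grading G :: int \<Rightarrow> ('w \<Rightarrow>\<^sub>0 'a) set)"
    by (rule gm_part[OF DF_gm[OF assms]])
next
  fix k r :: nat assume "1 \<le> r \<and> r \<le> k"
  then show "multilinear (tensor_scale sc) (tensor_scale sc) k (tensor_ops eta k r)"
    using ml_part[OF assms] by blast
next
  fix k r :: nat and bs :: "('w \<Rightarrow>\<^sub>0 'a) list" and ds
  assume h: "1 \<le> r \<and> r \<le> k \<and> length bs = k \<and> length ds = k \<and> (\<forall>j<k. bs ! j \<in> tensor_grading G (ds ! j))"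
  show "tensor_ops eta k r bs \<in> tensor_grading G (sum_list ds + int k - 2)"
    by (rule deg_part[OF assms]) (use h in simp_all)
next
  fix N r :: nat and bs :: "('w \<Rightarrow>\<^sub>0 'a) list" and ds
  assume h: "1 \<le> N \<and> 1 \<le> r \<and> r \<le> N \<and> length bs = N \<and> length ds = N \<and> (\<forall>j<N. bs ! j \<in> tensor_grading G (ds ! j))"
  show "(\<Sum>n\<in>{1..N}. \<Sum>i\<in>{1..N + 1 - n}.
           sgnapp i n ds
             (tensor_ops eta (N + 1 - n) (R0 (N + 1 - n) n i r)
                (take (i - 1) bs @
                   [(\<Sum>s\<in>Ri (N + 1 - n) n i r. tensor_ops eta n s (take n (drop (i - 1) bs)))]
                   @ drop (i - 1 + n) bs))) = 0"
    by (rule identity_part[OF assms]) (use h in simp_all)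
qed

end
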